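(* Fix $n\ge3$. In the infinite-block-length setting, the policy $\hat\pi_N$ induced by sequential Monte Carlo (as defined in the context) satisfies $$\mathbb{E}_{N\sim\mathrm{Poi}(n)|_{>0}}\big[D_{\mathrm{KL}}(\hat\pi_N\|\pi^\star_\beta)\big]\le\mathcal{O}\!\left(\frac{\log^2(n)}{n^2}\Big(\frac{\phi_{\max}}{\phi_{\min}}\Big)^2\right).$$
   Context: Prompts $x\in\mathcal{X}$ drawn from $\rho$, responses $y\in\mathcal{Y}$ (full responses). $\pi_{\mathrm{target}}$ and a generator $\pi_{\mathrm{gen}}$ are conditional distributions over responses (with $\pi_{\mathrm{gen}}$ of full support), $r(y|x)$ a reward, $\beta>0$. $\pi^\star_\beta(y|x)\propto\pi_{\mathrm{target}}(y|x)e^{\beta r(y|x)}$. Exponentiated score: $\phi_\beta(y|x)=\frac{\pi_{\mathrm{target}}(y|x)}{\pi_{\mathrm{gen}}(y|x)}e^{\beta r(y|x)}$, $\phi_{\max}=\max_{x,y}\phi_\beta(y|x)$, $\phi_{\min}=\min_{x,y}\phi_\beta(y|x)$. Sequential Monte Carlo with $N$ particles: given $x$, draw $Y_1,\dots,Y_N$ i.i.d. from $\pi_{\mathrm{gen}}(\cdot|x)$ and output $Y_i$ with probability $\phi_\beta(Y_i|x)/\sum_{j}\phi_\beta(Y_j|x)$; $\hat\pi_N$ is the induced output distribution (averaged over the draws). $\mathrm{Poi}(n)|_{>0}$ is the Poisson distribution with mean $n$ conditioned to be positive. $D_{\mathrm{KL}}(\pi_1\|\pi_2)=\mathbb{E}_{x\sim\rho}D_{\mathrm{KL}}(\pi_1(\cdot|x)\|\pi_2(\cdot|x))$.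 *)

theory Defs
  imports "HOL-Probability.Probability"
begin

text \<open>Prompts and responses are encoded as natural numbers; the prompt space X and the
response space Y are finite nonempty sets of naturals. Conditional distributions are
maps from prompts to pmfs on nat.\<close>

definition phi :: "(nat \<Rightarrow> nat pmf) \<Rightarrow> (nat \<Rightarrow> nat pmf) \<Rightarrow> (nat \<Rightarrow> nat \<Rightarrow> real) \<Rightarrow> real
    \<Rightarrow> nat \<Rightarrow> nat \<Rightarrow> real" where
  "phi tgt gen r \<beta> x y = pmf (tgt x) y / pmf (gen x) y * exp (\<beta> * r x y)"

definition phi_max :: "nat set \<Rightarrow> nat set \<Rightarrow> (nat \<Rightarrow> nat pmf) \<Rightarrow> (nat \<Rightarrow> nat pmf)
    \<Rightarrow> (nat \<Rightarrow> nat \<Rightarrow> real) \<Rightarrow> real \<Rightarrow> real" where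
  "phi_max X Y tgt gen r \<beta> = Max ((\<lambda>(x, y). phi tgt gen r \<beta> x y) ` (X \<times> Y))"

definition phi_min :: "nat set \<Rightarrow> nat set \<Rightarrow> (nat \<Rightarrow> nat pmf) \<Rightarrow> (nat \<Rightarrow> nat pmf)
    \<Rightarrow> (nat \<Rightarrow> nat \<Rightarrow> real) \<Rightarrow> real \<Rightarrow> real" where
  "phi_min X Y tgt gen r \<beta> = Min ((\<lambda>(x, y). phi tgt gen r \<beta> x y) ` (X \<times> Y))"

definition pistar :: "nat set \<Rightarrow> (nat \<Rightarrow> nat pmf) \<Rightarrow> (nat \<Rightarrow> nat \<Rightarrow> real) \<Rightarrow> real
    \<Rightarrow> nat \<Rightarrow> nat \<Rightarrow> real" where
  "pistar Y tgt r \<beta> x y =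
     pmf (tgt x) y * exp (\<beta> * r x y) / (\<Sum>y'\<in>Y. pmf (tgt x) y' * exp (\<beta> * r x y'))"

text \<open>Output distribution of SMC with N particles: draw Y_1..Y_N iid from gen(.|x)
(tuples indexed by {..<N}), output Y_i with probability phi(Y_i)/sum_j phi(Y_j),
averaged over the draws.\<close>
definition smc :: "nat set \<Rightarrow> (nat \<Rightarrow> nat pmf) \<Rightarrow> (nat \<Rightarrow> nat pmf) \<Rightarrow> (nat \<Rightarrow> nat \<Rightarrow> real)
    \<Rightarrow> real \<Rightarrow> nat \<Rightarrow> nat \<Rightarrow> nat \<Rightarrow> real" where
  "smc Y tgt gen r \<beta> N x y =
     (\<Sum>ys\<in>PiE {..<N} (\<lambda>_. Y).
        (\<Prod>i<N. pmf (gen x) (ys i)) *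
        ((\<Sum>i<N. if ys i = y then phi tgt gen r \<beta> x (ys i) else 0) /
         (\<Sum>j<N. phi tgt gen r \<beta> x (ys j))))"

definition KL_cond :: "nat set \<Rightarrow> (nat \<Rightarrow> real) \<Rightarrow> (nat \<Rightarrow> real) \<Rightarrow> real" where
  "KL_cond Y p q = (\<Sum>y\<in>Y. if p y = 0 then 0 else p y * ln (p y / q y))"

definition KL_avg :: "nat set \<Rightarrow> nat set \<Rightarrow> nat pmf \<Rightarrow> (nat \<Rightarrow> nat \<Rightarrow> real)
    \<Rightarrow> (nat \<Rightarrow> nat \<Rightarrow> real) \<Rightarrow> real" where
  "KL_avg X Y \<rho> p q = (\<Sum>x\<in>X. pmf \<rho> x * KL_cond Y (p x) (q x))"

definition poi_pos :: "real \<Rightarrow> nat \<Rightarrow> real" where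
  "poi_pos m k = (if k = 0 then 0
      else exp (- m) * m ^ k / fact k / (1 - exp (- m)))"

end

theory Submission
  imports Defs
begin


definition EE :: "nat set \<Rightarrow> (nat \<Rightarrow> real) \<Rightarrow> nat set \<Rightarrow> ((nat \<Rightarrow> nat) \<Rightarrow> real) \<Rightarrow> real" where
  "EE Y g I F = (\<Sum>ys\<in>PiE I (\<lambda>_. Y). (\<Prod>i\<in>I. g (ys i)) * F ys)"

lemma EE_insert:
  assumes "finite I" "i \<notin> I" "finite Y"
  shows "EE Y g (insert i I) F = (\<Sum>y\<in>Y. g y * EE Y g I (\<lambda>ys. F (ys(i:=y))))"
proof -
  have "EE Y g (insert i I) F =
     (\<Sum>p\<in>Y \<times> PiE I (\<lambda>_. Y). (\<Prod>j\<in>insert i I. g (((snd p)(i := fst p)) j)) * F ((snd p)(i := fst p)))"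
    unfolding EE_def PiE_insert_eq
    by (subst sum.reindex[OF inj_combinator[OF assms(2)]]) (simp add: case_prod_beta)
  also have "\<dots> = (\<Sum>y\<in>Y. \<Sum>zs\<in>PiE I (\<lambda>_. Y). g y * ((\<Prod>j\<in>I. g (zs j)) * F (zs(i := y))))"
  proof -
    have "\<And>y zs. (\<Prod>j\<in>insert i I. g ((zs(i := y)) j)) = g y * (\<Prod>j\<in>I. g (zs j))"
      using assms by (simp add: prod.insert) (rule disjI2, rule prod.cong, auto)
    then show ?thesis by (simp add: sum.cartesian_product case_prod_beta mult.assoc)
  qed
  also have "\<dots> = (\<Sum>y\<in>Y. g y * EE Y g I (\<lambda>ys. F (ys(i:=y))))"
    by (simp add: EE_def sum_distrib_left)
  finally show ?thesis .
qed

lemma sum_upd_insert: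
  assumes "finite I" "i \<notin> I"
  shows "(\<Sum>j\<in>insert i I. h ((ys(i:=y)) j)) = h y + (\<Sum>j\<in>I. h (ys j))"
proof -
  have "(\<Sum>j\<in>I. h ((ys(i:=y)) j)) = (\<Sum>j\<in>I. h (ys j))"
    using assms by (intro sum.cong) auto
  then show ?thesis using assms by simp
qed

lemma sum_if_notin:
  assumes "i \<notin> I"
  shows "(\<Sum>j\<in>I. h (if j = i then y else ys j)) = (\<Sum>j\<in>I. h (ys j))"
  using assms by (intro sum.cong) auto

lemma EE_add: "EE Y g I (\<lambda>ys. F ys + G ys) = EE Y g I F + EE Y g I G"
  by (simp add: EE_def algebra_simps sum.distrib)

lemma EE_cmult: "EE Y g I (\<lambda>ys. c * F ys) = c * EE Y g I F"
  by (simp add: EE_def algebra_simps sum_distrib_left)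

lemma EE_cong: "(\<And>ys. ys \<in> PiE I (\<lambda>_. Y) \<Longrightarrow> F ys = G ys) \<Longrightarrow> EE Y g I F = EE Y g I G"
  unfolding EE_def by (intro sum.cong) auto

lemma EE_mono:
  assumes "\<And>y. y \<in> Y \<Longrightarrow> g y \<ge> 0" "\<And>ys. ys \<in> PiE I (\<lambda>_. Y) \<Longrightarrow> F ys \<le> G ys"
  shows "EE Y g I F \<le> EE Y g I G"
  unfolding EE_def
proof (intro sum_mono mult_left_mono)
  fix ys assume ys: "ys \<in> PiE I (\<lambda>_. Y)"
  then show "F ys \<le> G ys" using assms(2) by blast
  show "0 \<le> (\<Prod>i\<in>I. g (ys i))" using ys assms(1) by (intro prod_nonneg) (auto simp: PiE_iff)
qed

lemma EE_const:
  assumes "finite I" "finite Y" "(\<Sum>y\<in>Y. g y) = 1"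
  shows "EE Y g I (\<lambda>_. c) = c"
  using assms(1)
proof (induction I rule: finite_induct)
  case empty
  then show ?case by (simp add: EE_def)
next
  case (insert i I)
  then show ?case using assms by (simp add: EE_insert sum_distrib_right[symmetric])
qed

lemma EE_T:
  assumes "finite I" "finite Y" "(\<Sum>y\<in>Y. g y) = 1" "(\<Sum>y\<in>Y. g y * c y) = 0"
  shows "EE Y g I (\<lambda>ys. \<Sum>j\<in>I. c (ys j)) = 0"
  using assms(1)
proof (induction I rule: finite_induct)
  case empty
  then show ?case by (simp add: EE_def)
next
  case (insert i I)
  have "EE Y g (insert i I) (\<lambda>ys. \<Sum>j\<in>insert i I. c (ys j))
      = (\<Sum>y\<in>Y. g y * EE Y g I (\<lambda>ys. c y + (\<Sum>j\<in>I. c (ys j))))"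
    using insert assms by (simp add: EE_insert sum_if_notin)
  also have "\<dots> = (\<Sum>y\<in>Y. g y * c y)"
    using insert assms by (simp add: EE_add EE_const)
  finally show ?case using assms by simp
qed

lemma EE_T2:
  fixes g c :: "nat \<Rightarrow> real"
  assumes "finite I" "finite Y" "(\<Sum>y\<in>Y. g y) = 1" "(\<Sum>y\<in>Y. g y * c y) = 0"
  shows "EE Y g I (\<lambda>ys. (\<Sum>j\<in>I. c (ys j))^2) = card I * (\<Sum>y\<in>Y. g y * (c y)^2)"
  using assms(1)
proof (induction I rule: finite_induct)
  case empty
  then show ?case by (simp add: EE_def)
next
  case (insert i I)
  let ?T = "\<lambda>ys. \<Sum>j\<in>I. c (ys j)"
  have "EE Y g (insert i I) (\<lambda>ys. (\<Sum>j\<in>insert i I. c (ys j))^2)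
      = (\<Sum>y\<in>Y. g y * EE Y g I (\<lambda>ys. (c y)^2 + (2 * c y * ?T ys + (?T ys)^2)))"
    using insert assms by (simp add: EE_insert sum_if_notin power2_sum algebra_simps)
  also have "\<dots> = (\<Sum>y\<in>Y. g y * ((c y)^2 + card I * (\<Sum>y\<in>Y. g y * (c y)^2)))"
  proof -
    have z: "EE Y g I (\<lambda>ys. 2 * c y * ?T ys) = 0" for y
      using EE_cmult[of Y g I "2 * c y" ?T] EE_T[OF insert(1) assms(2-4)] by simp
    show ?thesis using insert assms by (simp add: EE_add EE_const z)
  qed
  also have "\<dots> = (\<Sum>y\<in>Y. g y * (c y)^2) + card I * (\<Sum>y\<in>Y. g y * (c y)^2)"
    using assms by (simp add: algebra_simps sum.distrib sum_distrib_right[symmetric])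
  finally show ?case using insert by (simp add: algebra_simps)
qed

lemma Q_bounds:
  fixes g \<phi> :: "nat \<Rightarrow> real" and a b z :: real
  assumes I: "finite I" and Y: "finite Y" and g1: "(\<Sum>y\<in>Y. g y) = 1"
    and gpos: "\<And>y. y \<in> Y \<Longrightarrow> g y \<ge> 0"
    and ab: "\<And>y. y \<in> Y \<Longrightarrow> a \<le> \<phi> y \<and> \<phi> y \<le> b" and a: "a > 0"
    and z: "a \<le> z"
  defines "(\<mu>::real) \<equiv> (\<Sum>y\<in>Y. g y * \<phi> y)"
  defines "(V::real) \<equiv> (\<Sum>y\<in>Y. g y * (\<phi> y - \<mu>)^2)"
  defines "m \<equiv> (real (card I) + 1) * \<mu>"
  defines "(Q::real) \<equiv> EE Y g I (\<lambda>ys. 1 / (z + (\<Sum>j\<in>I. \<phi> (ys j))))"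
  assumes mpos: "\<mu> > 0"
  shows "Q \<le> 1 / ((real (card I) + 1) * a)"
    and "1/m - (z - \<mu>)/m^2 \<le> Q"
    and "Q \<le> 1/m - (z - \<mu>)/m^2 + ((z - \<mu>)^2 + real (card I) * V) / (m^2 * ((real (card I) + 1) * a))"
proof -
  define K where "K = real (card I)"
  define c where "c = z - \<mu>"
  define T where "T = (\<lambda>ys. \<Sum>j\<in>I. (\<phi> (ys j) - \<mu>))"
  define D where "D = (\<lambda>ys. z + (\<Sum>j\<in>I. \<phi> (ys j)))"
  define R where "R = (\<lambda>ys. (c + T ys)^2 / (m^2 * D ys))"
  have mp: "m > 0" unfolding m_def using mpos by simp
  have Dlow: "D ys \<ge> (K + 1) * a" if "ys \<in> PiE I (\<lambda>_. Y)" for ys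
  proof -
    have "(\<Sum>j\<in>I. \<phi> (ys j)) \<ge> (\<Sum>j\<in>I. a)"
      using that ab by (intro sum_mono) (auto simp: PiE_iff)
    then show ?thesis using z unfolding D_def K_def by (simp add: algebra_simps)
  qed
  have Dpos: "D ys > 0" if "ys \<in> PiE I (\<lambda>_. Y)" for ys
  proof -
    have "(K + 1) * a > 0" using a unfolding K_def by (intro mult_pos_pos) auto
    then show ?thesis using Dlow[OF that] by linarith
  qed
  have DT: "D ys - m = c + T ys" for ys
    unfolding D_def T_def c_def m_def K_def by (simp add: sum_subtractf algebra_simps)
  have ident: "1 / D ys = (1/m - c/m^2) + ((- 1/m^2) * T ys + R ys)" if "ys \<in> PiE I (\<lambda>_. Y)" for ys
  proof -
    have "1 / D ys = 1/m - (D ys - m)/m^2 + (D ys - m)^2/(m^2 * D ys)"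
      using Dpos[OF that] mp by (simp add: field_simps power2_eq_square)
    then show ?thesis unfolding R_def DT[symmetric] by (simp add: DT add_divide_distrib diff_divide_distrib)
  qed
  have gc: "(\<Sum>y\<in>Y. g y * (\<phi> y - \<mu>)) = 0"
  proof -
    have "(\<Sum>y\<in>Y. g y * (\<phi> y - \<mu>)) = (\<Sum>y\<in>Y. g y * \<phi> y) - (\<Sum>y\<in>Y. g y) * \<mu>"
      by (simp add: right_diff_distrib sum_subtractf sum_distrib_right)
    then show ?thesis using g1 unfolding \<mu>_def by simp
  qed
  have ET: "EE Y g I T = 0" unfolding T_def using EE_T[OF I Y g1 gc] .
  have ET2: "EE Y g I (\<lambda>ys. (T ys)^2) = K * V"
    unfolding T_def K_def V_def using EE_T2[OF I Y g1 gc] .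
  have QR: "Q = (1/m - c/m^2) + EE Y g I R"
  proof -
    have "Q = EE Y g I (\<lambda>ys. (1/m - c/m^2) + ((- 1/m^2) * T ys + R ys))"
      unfolding Q_def by (rule EE_cong) (simp add: ident[unfolded D_def])
    also have "\<dots> = (1/m - c/m^2) + EE Y g I R"
      by (simp only: EE_add EE_const[OF I Y g1] EE_cmult ET)
    finally show ?thesis .
  qed
  have R0: "EE Y g I R \<ge> 0"
  proof -
    have "EE Y g I (\<lambda>_. 0) \<le> EE Y g I R"
    proof (intro EE_mono gpos)
      fix ys assume ys: "ys \<in> PiE I (\<lambda>_. Y)"
      have "0 \<le> m^2 * D ys" using Dpos[OF ys] mp by simp
      then show "0 \<le> R ys" unfolding R_def by simp
    qed
    then show ?thesis using EE_const[OF I Y g1, of 0] by simp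
  qed
  show "1/m - (z - \<mu>)/m^2 \<le> Q" using QR R0 c_def by simp
  have Rup: "EE Y g I R \<le> (c^2 + K * V) / (m^2 * ((K + 1) * a))"
  proof -
    let ?k = "1 / (m^2 * ((K + 1) * a))"
    have "EE Y g I R \<le> EE Y g I (\<lambda>ys. ?k * (c^2 + ((2 * c) * T ys + (T ys)^2)))"
    proof (intro EE_mono gpos)
      fix ys assume ys: "ys \<in> PiE I (\<lambda>_. Y)"
      have "(c + T ys)^2 / (m^2 * D ys) \<le> (c + T ys)^2 / (m^2 * ((K + 1) * a))"
        using Dlow[OF ys] Dpos[OF ys] mp a unfolding K_def by (intro divide_left_mono mult_left_mono mult_pos_pos) auto
      also have "\<dots> = ?k * (c + T ys)^2" by simp
      also have "\<dots> = ?k * (c^2 + ((2 * c) * T ys + (T ys)^2))" by (simp add: power2_sum)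
      finally show "R ys \<le> ?k * (c^2 + ((2 * c) * T ys + (T ys)^2))"
        unfolding R_def .
    qed
    also have "\<dots> = ?k * (c^2 + K * V)"
      by (simp only: EE_cmult EE_add EE_const[OF I Y g1] ET ET2) simp
    finally show ?thesis by simp
  qed
  show "Q \<le> 1/m - (z - \<mu>)/m^2 + ((z - \<mu>)^2 + real (card I) * V) / (m^2 * ((real (card I) + 1) * a))"
    using QR Rup unfolding c_def K_def by simp
  show "Q \<le> 1 / ((real (card I) + 1) * a)"
  proof -
    have "Q \<le> EE Y g I (\<lambda>_. 1 / ((K + 1) * a))"
      unfolding Q_def
    proof (intro EE_mono gpos)
      fix ys assume ys: "ys \<in> PiE I (\<lambda>_. Y)"
      have "1 / D ys \<le> 1 / ((K + 1) * a)"
        using Dlow[OF ys] Dpos[OF ys] a unfolding K_def by (intro divide_left_mono mult_pos_pos) auto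
      then show "1 / (z + (\<Sum>j\<in>I. \<phi> (ys j))) \<le> 1 / ((K + 1) * a)" unfolding D_def .
    qed
    then show ?thesis using EE_const[OF I Y g1] K_def by simp
  qed
qed

lemma q_repr:
  fixes g \<phi> :: "nat \<Rightarrow> real" and N :: nat
  assumes Y: "finite Y" and y: "y \<in> Y"
  shows "(\<Sum>ys\<in>PiE {..<N} (\<lambda>_. Y). (\<Prod>i<N. g (ys i)) *
            ((\<Sum>i<N. if ys i = y then \<phi> (ys i) else 0) / (\<Sum>j<N. \<phi> (ys j))))
       = g y * \<phi> y * (\<Sum>i<N. EE Y g ({..<N}-{i}) (\<lambda>ys. 1 / (\<phi> y + (\<Sum>j\<in>{..<N}-{i}. \<phi> (ys j)))))"
proof -
  have e: "(\<Sum>i<N. if ys i = y then \<phi> (ys i) else 0) / (\<Sum>j<N. \<phi> (ys j))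
      = (\<Sum>i<N. if ys i = y then \<phi> y / (\<Sum>j<N. \<phi> (ys j)) else 0)" for ys
    unfolding sum_divide_distrib by (intro sum.cong refl) auto
  have "(\<Sum>ys\<in>PiE {..<N} (\<lambda>_. Y). (\<Prod>i<N. g (ys i)) *
            ((\<Sum>i<N. if ys i = y then \<phi> (ys i) else 0) / (\<Sum>j<N. \<phi> (ys j))))
     = (\<Sum>ys\<in>PiE {..<N} (\<lambda>_. Y). \<Sum>i<N. (\<Prod>i<N. g (ys i)) *
            (if ys i = y then \<phi> y / (\<Sum>j<N. \<phi> (ys j)) else 0))"
    unfolding e sum_distrib_left ..
  also have "\<dots> = (\<Sum>i<N. EE Y g {..<N} (\<lambda>ys. if ys i = y then \<phi> y / (\<Sum>j<N. \<phi> (ys j)) else 0))"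
    unfolding EE_def by (rule sum.swap)
  also have "\<dots> = (\<Sum>i<N. g y * \<phi> y * EE Y g ({..<N}-{i}) (\<lambda>ys. 1 / (\<phi> y + (\<Sum>j\<in>{..<N}-{i}. \<phi> (ys j)))))"
  proof (intro sum.cong refl)
    fix i assume i: "i \<in> {..<N}"
    define I' where "I' = {..<N} - {i}"
    have ins: "{..<N} = insert i I'" using i unfolding I'_def by auto
    have fin: "finite I'" "i \<notin> I'" unfolding I'_def by auto
    have S: "(\<Sum>j<N. \<phi> ((ys(i:=z)) j)) = \<phi> z + (\<Sum>j\<in>I'. \<phi> (ys j))" for ys z
      unfolding ins using sum_upd_insert[OF fin, of \<phi> ys z] .
    have "EE Y g {..<N} (\<lambda>ys. if ys i = y then \<phi> y / (\<Sum>j<N. \<phi> (ys j)) else 0)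
        = (\<Sum>z\<in>Y. g z * EE Y g I' (\<lambda>ys. if z = y then \<phi> y / (\<phi> z + (\<Sum>j\<in>I'. \<phi> (ys j))) else 0))"
      unfolding ins EE_insert[OF fin Y] unfolding ins[symmetric] S by simp
    also have "\<dots> = g y * EE Y g I' (\<lambda>ys. \<phi> y / (\<phi> y + (\<Sum>j\<in>I'. \<phi> (ys j))))"
    proof -
      have "(\<Sum>z\<in>Y. g z * EE Y g I' (\<lambda>ys. if z = y then \<phi> y / (\<phi> z + (\<Sum>j\<in>I'. \<phi> (ys j))) else 0))
          = (\<Sum>z\<in>Y. if z = y then g y * EE Y g I' (\<lambda>ys. \<phi> y / (\<phi> y + (\<Sum>j\<in>I'. \<phi> (ys j)))) else 0)"
        by (intro sum.cong refl) (simp add: EE_def)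
      then show ?thesis using Y y by simp
    qed
    also have "\<dots> = g y * \<phi> y * EE Y g I' (\<lambda>ys. 1 / (\<phi> y + (\<Sum>j\<in>I'. \<phi> (ys j))))"
      using EE_cmult[of Y g I' "\<phi> y" "\<lambda>ys. 1 / (\<phi> y + (\<Sum>j\<in>I'. \<phi> (ys j)))"] by simp
    finally show "EE Y g {..<N} (\<lambda>ys. if ys i = y then \<phi> y / (\<Sum>j<N. \<phi> (ys j)) else 0)
        = g y * \<phi> y * EE Y g ({..<N}-{i}) (\<lambda>ys. 1 / (\<phi> y + (\<Sum>j\<in>{..<N}-{i}. \<phi> (ys j))))"
      unfolding I'_def .
  qed
  also have "\<dots> = g y * \<phi> y * (\<Sum>i<N. EE Y g ({..<N}-{i}) (\<lambda>ys. 1 / (\<phi> y + (\<Sum>j\<in>{..<N}-{i}. \<phi> (ys j)))))"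
    by (simp add: sum_distrib_left)
  finally show ?thesis .
qed

lemma q_sum1:
  fixes g \<phi> :: "nat \<Rightarrow> real" and N :: nat
  assumes Y: "finite Y" and g1: "(\<Sum>y\<in>Y. g y) = 1" and pos: "\<And>y. y \<in> Y \<Longrightarrow> \<phi> y > 0" and N: "N \<ge> 1"
  shows "(\<Sum>y\<in>Y. \<Sum>ys\<in>PiE {..<N} (\<lambda>_. Y). (\<Prod>i<N. g (ys i)) *
            ((\<Sum>i<N. if ys i = y then \<phi> (ys i) else 0) / (\<Sum>j<N. \<phi> (ys j)))) = 1"
proof -
  have "(\<Sum>y\<in>Y. \<Sum>ys\<in>PiE {..<N} (\<lambda>_. Y). (\<Prod>i<N. g (ys i)) *
            ((\<Sum>i<N. if ys i = y then \<phi> (ys i) else 0) / (\<Sum>j<N. \<phi> (ys j))))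
     = (\<Sum>ys\<in>PiE {..<N} (\<lambda>_. Y). (\<Prod>i<N. g (ys i)) *
            ((\<Sum>y\<in>Y. \<Sum>i<N. if ys i = y then \<phi> (ys i) else 0) / (\<Sum>j<N. \<phi> (ys j))))"
    by (subst sum.swap) (simp add: sum_distrib_left sum_divide_distrib)
  also have "\<dots> = (\<Sum>ys\<in>PiE {..<N} (\<lambda>_. Y). (\<Prod>i<N. g (ys i)) * 1)"
  proof (intro sum.cong refl arg_cong2[where f="(*)"])
    fix ys assume ys: "ys \<in> PiE {..<N} (\<lambda>_. Y)"
    have "(\<Sum>y\<in>Y. \<Sum>i<N. if ys i = y then \<phi> (ys i) else 0) = (\<Sum>i<N. \<Sum>y\<in>Y. if ys i = y then \<phi> (ys i) else 0)"
      by (rule sum.swap)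
    also have "\<dots> = (\<Sum>i<N. \<phi> (ys i))"
      using ys Y by (intro sum.cong refl) (auto simp: PiE_iff)
    finally have e: "(\<Sum>y\<in>Y. \<Sum>i<N. if ys i = y then \<phi> (ys i) else 0) = (\<Sum>i<N. \<phi> (ys i))" .
    have ne: "{..<N} \<noteq> {}" using N lessThan_empty_iff[of N] by simp
    have "(\<Sum>i<N. \<phi> (ys i)) > 0"
      using ys pos by (intro sum_pos[OF finite_lessThan ne]) (auto simp: PiE_iff)
    then show "(\<Sum>y\<in>Y. \<Sum>i<N. if ys i = y then \<phi> (ys i) else 0) / (\<Sum>j<N. \<phi> (ys j)) = 1"
      unfolding e by simp
  qed
  also have "\<dots> = EE Y g {..<N} (\<lambda>_. 1)" unfolding EE_def by simp
  also have "\<dots> = 1" using EE_const[OF _ Y g1] by simp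
  finally show ?thesis .
qed

lemma KL_gen:
  fixes p q R :: "nat \<Rightarrow> real"
  assumes Y: "finite Y" and p1: "(\<Sum>y\<in>Y. p y) = 1" and q1: "(\<Sum>y\<in>Y. q y) = 1"
    and ppos: "\<And>y. y \<in> Y \<Longrightarrow> p y > 0" and qR: "\<And>y. y \<in> Y \<Longrightarrow> q y = p y * R y"
    and R0: "\<And>y. y \<in> Y \<Longrightarrow> R y \<ge> 0"
  shows "0 \<le> KL_cond Y q p"
    and "(\<And>y. y \<in> Y \<Longrightarrow> R y \<le> \<kappa>) \<Longrightarrow> KL_cond Y q p \<le> ln \<kappa>"
    and "(\<And>y. y \<in> Y \<Longrightarrow> \<bar>R y - 1\<bar> \<le> \<epsilon>) \<Longrightarrow> KL_cond Y q p \<le> \<epsilon>^2"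
proof -
  define t where "t = (\<lambda>y. if q y = 0 then 0 else q y * ln (q y / p y))"
  have KL: "KL_cond Y q p = (\<Sum>y\<in>Y. t y)" unfolding KL_cond_def t_def ..
  have t1: "t y \<ge> q y - p y" if y: "y \<in> Y" for y
  proof (cases "q y = 0")
    case True then show ?thesis using ppos[OF y] by (simp add: t_def)
  next
    case False
    have Rp: "R y > 0" using False R0[OF y] qR[OF y] by (cases "R y = 0") auto
    have "ln (1 / R y) \<le> 1 / R y - 1" using Rp by (intro ln_le_minus_one) simp
    then have "ln (R y) \<ge> 1 - 1 / R y" using Rp by (simp add: ln_div)
    then have "q y * ln (R y) \<ge> q y * (1 - 1 / R y)"
      using False qR[OF y] ppos[OF y] Rp by (intro mult_left_mono) auto
    moreover have "q y * (1 - 1 / R y) = q y - p y" using qR[OF y] Rp by (simp add: field_simps)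
    moreover have "q y / p y = R y" using qR[OF y] ppos[OF y] by simp
    ultimately show ?thesis using False by (simp add: t_def)
  qed
  show "0 \<le> KL_cond Y q p"
  proof -
    have "(\<Sum>y\<in>Y. q y - p y) \<le> (\<Sum>y\<in>Y. t y)" using t1 by (intro sum_mono) auto
    then show ?thesis using p1 q1 KL by (simp add: sum_subtractf)
  qed
  show "KL_cond Y q p \<le> ln \<kappa>" if k: "\<And>y. y \<in> Y \<Longrightarrow> R y \<le> \<kappa>"
  proof -
    have "t y \<le> q y * ln \<kappa>" if y: "y \<in> Y" for y
    proof (cases "q y = 0")
      case True then show ?thesis by (simp add: t_def)
    next
      case False
      have Rp: "R y > 0" using False R0[OF y] qR[OF y] by (cases "R y = 0") auto
      have "q y / p y = R y" using qR[OF y] ppos[OF y] by simp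
      moreover have "ln (R y) \<le> ln \<kappa>" using Rp k[OF y] by simp
      moreover have "q y \<ge> 0" using qR[OF y] ppos[OF y] R0[OF y] by simp
      ultimately show ?thesis using False by (simp add: t_def mult_left_mono)
    qed
    then have "(\<Sum>y\<in>Y. t y) \<le> (\<Sum>y\<in>Y. q y * ln \<kappa>)" by (intro sum_mono) auto
    then show ?thesis using KL q1 by (simp add: sum_distrib_right[symmetric])
  qed
  show "KL_cond Y q p \<le> \<epsilon>^2" if e: "\<And>y. y \<in> Y \<Longrightarrow> \<bar>R y - 1\<bar> \<le> \<epsilon>"
  proof -
    have "t y \<le> p y * (R y - 1)^2 + (q y - p y)" if y: "y \<in> Y" for y
    proof (cases "q y = 0")
      case True
      then have "R y = 0" using qR[OF y] ppos[OF y] by simp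
      then show ?thesis using True by (simp add: t_def)
    next
      case False
      have Rp: "R y > 0" using False R0[OF y] qR[OF y] by (cases "R y = 0") auto
      have "q y / p y = R y" using qR[OF y] ppos[OF y] by simp
      moreover have "ln (R y) \<le> R y - 1" using Rp by (intro ln_le_minus_one)
      moreover have "q y \<ge> 0" using qR[OF y] ppos[OF y] R0[OF y] by simp
      ultimately have "t y \<le> q y * (R y - 1)" using False by (simp add: t_def mult_left_mono)
      also have "\<dots> = p y * (R y - 1)^2 + (q y - p y)" using qR[OF y]
        by (simp add: power2_eq_square algebra_simps)
      finally show ?thesis .
    qed
    then have "(\<Sum>y\<in>Y. t y) \<le> (\<Sum>y\<in>Y. p y * (R y - 1)^2 + (q y - p y))" by (intro sum_mono) auto
    also have "\<dots> = (\<Sum>y\<in>Y. p y * (R y - 1)^2)" using p1 q1 by (simp add: sum.distrib sum_subtractf)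
    also have "\<dots> \<le> (\<Sum>y\<in>Y. p y * \<epsilon>^2)"
    proof (intro sum_mono mult_left_mono)
      fix y assume y: "y \<in> Y"
      have "(R y - 1)^2 = \<bar>R y - 1\<bar>^2" by simp
      also have "\<dots> \<le> \<epsilon>^2" using e[OF y] by (intro power_mono) auto
      finally show "(R y - 1)^2 \<le> \<epsilon>^2" .
      show "0 \<le> p y" using ppos[OF y] by simp
    qed
    also have "\<dots> = \<epsilon>^2" using p1 by (simp add: sum_distrib_right[symmetric])
    finally show ?thesis using KL by simp
  qed
qed

lemma lin_aux:
  fixes R X E A k s :: real
  assumes "R \<le> 1 - X + E" "1 - X \<le> R" "- X \<le> A" "X \<le> A" "A \<le> k" "E \<le> s + k" "s \<le> k" "0 \<le> k"
  shows "R - 1 \<le> 3 * k \<and> - (R - 1) \<le> 3 * k"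
  using assms by linarith

lemma per_x:
  fixes g \<phi> :: "nat \<Rightarrow> real" and N :: nat and a b :: real
  assumes Y: "finite Y" "Y \<noteq> {}" and g1: "(\<Sum>y\<in>Y. g y) = 1" and gpos: "\<And>y. y \<in> Y \<Longrightarrow> g y > 0"
    and ab: "\<And>y. y \<in> Y \<Longrightarrow> a \<le> \<phi> y \<and> \<phi> y \<le> b" and a: "a > 0" and N: "N \<ge> 1"
  defines "(\<mu>::real) \<equiv> (\<Sum>y\<in>Y. g y * \<phi> y)"
  defines "q \<equiv> (\<lambda>y. (\<Sum>ys\<in>PiE {..<N} (\<lambda>_. Y). (\<Prod>i<N. g (ys i)) *
            ((\<Sum>i<N. if ys i = y then \<phi> (ys i) else 0) / (\<Sum>j<N. \<phi> (ys j)))))"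
  defines "p \<equiv> (\<lambda>y. g y * \<phi> y / \<mu>)"
  shows "0 \<le> KL_cond Y q p" and "KL_cond Y q p \<le> ln (b / a)"
    and "real N \<ge> b / a \<Longrightarrow> KL_cond Y q p \<le> 9 * (b / a)^2 / (real N)^2"
proof -
  have gnn: "\<And>y. y \<in> Y \<Longrightarrow> g y \<ge> 0" using gpos less_imp_le by blast
  have phin: "\<phi> y \<ge> 0" if "y \<in> Y" for y using ab[OF that] a by linarith
  have mua: "\<mu> \<ge> a"
  proof -
    have "(\<Sum>y\<in>Y. g y * a) \<le> \<mu>" unfolding \<mu>_def using ab gnn by (intro sum_mono mult_left_mono) auto
    then show ?thesis using g1 by (simp add: sum_distrib_right[symmetric])
  qed
  have mub: "\<mu> \<le> b"
  proof -
    have "\<mu> \<le> (\<Sum>y\<in>Y. g y * b)" unfolding \<mu>_def using ab gnn by (intro sum_mono mult_left_mono) auto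
    then show ?thesis using g1 by (simp add: sum_distrib_right[symmetric])
  qed
  have mup: "\<mu> > 0" using mua a by linarith
  have ba: "b \<ge> a" using ab Y(2) by fastforce
  have p1: "(\<Sum>y\<in>Y. p y) = 1"
    unfolding p_def using mup by (simp add: sum_divide_distrib[symmetric] \<mu>_def)
  have ppos: "p y > 0" if "y \<in> Y" for y
    unfolding p_def using gpos[OF that] ab[OF that] a mup by (intro divide_pos_pos mult_pos_pos) auto
  have q1: "(\<Sum>y\<in>Y. q y) = 1" unfolding q_def
    using q_sum1[OF Y(1) g1 _ N, where \<phi>=\<phi>] ab a by (meson less_le_trans)
  define Q where "Q = (\<lambda>y i. EE Y g ({..<N}-{i}) (\<lambda>ys. 1 / (\<phi> y + (\<Sum>j\<in>{..<N}-{i}. \<phi> (ys j)))))"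
  define R where "R = (\<lambda>y. \<mu> * (\<Sum>i<N. Q y i))"
  have qR: "q y = p y * R y" if y: "y \<in> Y" for y
    using q_repr[OF Y(1) y, where g=g and \<phi>=\<phi> and N=N] mup unfolding q_def p_def R_def Q_def by simp
  define V where "V = (\<Sum>y\<in>Y. g y * (\<phi> y - \<mu>)^2)"
  have cardI: "real (card ({..<N}-{i})) + 1 = real N" if "i < N" for i
    using that N by (simp add: of_nat_diff)
  have Qb: "Q y i \<le> 1 / (real N * a)"
       "1/(real N * \<mu>) - (\<phi> y - \<mu>)/(real N * \<mu>)^2 \<le> Q y i"
       "Q y i \<le> 1/(real N * \<mu>) - (\<phi> y - \<mu>)/(real N * \<mu>)^2
           + ((\<phi> y - \<mu>)^2 + (real N - 1) * V) / ((real N * \<mu>)^2 * (real N * a))"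
    if y: "y \<in> Y" and i: "i < N" for y i
  proof -
    have fin: "finite ({..<N}-{i})" by simp
    have zb: "a \<le> \<phi> y" using ab[OF y] by simp
    note QB0 = Q_bounds[where g=g and \<phi>=\<phi> and a=a and b=b and z="\<phi> y" and I="{..<N}-{i}" and Y=Y]
    note QB1 = QB0[OF fin Y(1) g1 gnn ab a zb]
    note QB2 = QB1[folded \<mu>_def]
    note QB = QB2[folded V_def]
    have cI: "real (card ({..<N}-{i})) = real N - 1" using cardI[OF i] by linarith
    show "Q y i \<le> 1 / (real N * a)" using QB(1) mup unfolding Q_def cardI[OF i] by blast
    show "1/(real N * \<mu>) - (\<phi> y - \<mu>)/(real N * \<mu>)^2 \<le> Q y i" using QB(2) mup unfolding Q_def cardI[OF i] by blast
    show "Q y i \<le> 1/(real N * \<mu>) - (\<phi> y - \<mu>)/(real N * \<mu>)^2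
           + ((\<phi> y - \<mu>)^2 + (real N - 1) * V) / ((real N * \<mu>)^2 * (real N * a))"
      using QB(3) mup unfolding Q_def cardI[OF i] unfolding cI by blast
  qed
  have Q0: "Q y i \<ge> 0" if y: "y \<in> Y" for y i
  proof -
    have "EE Y g ({..<N}-{i}) (\<lambda>_. 0) \<le> Q y i" unfolding Q_def
    proof (intro EE_mono gnn)
      fix ys assume ys: "ys \<in> PiE ({..<N}-{i}) (\<lambda>_. Y)"
      have "(\<Sum>j\<in>{..<N}-{i}. \<phi> (ys j)) \<ge> 0"
        using ys ab a by (intro sum_nonneg) (force simp: PiE_iff)
      moreover have "\<phi> y > 0" using ab[OF y] a by linarith
      ultimately show "0 \<le> 1 / (\<phi> y + (\<Sum>j\<in>{..<N}-{i}. \<phi> (ys j)))" by simp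
    qed
    then show ?thesis using EE_const[OF _ Y(1) g1, of "{..<N}-{i}" 0] by simp
  qed
  have R0: "R y \<ge> 0" if "y \<in> Y" for y
    unfolding R_def using Q0[OF that] mup by (intro mult_nonneg_nonneg sum_nonneg) auto
  note KL = KL_gen[OF Y(1) p1 q1 ppos qR R0]
  show "0 \<le> KL_cond Y q p" using KL(1) by blast
  have Rk: "R y \<le> b / a" if y: "y \<in> Y" for y
  proof -
    have "(\<Sum>i<N. Q y i) \<le> (\<Sum>i<N. 1 / (real N * a))" using Qb(1)[OF y] by (intro sum_mono) auto
    also have "\<dots> = 1 / a" using N by simp
    finally have "R y \<le> \<mu> * (1 / a)" unfolding R_def using mup by (intro mult_left_mono) auto
    also have "\<dots> \<le> b / a" using mub a by (simp add: divide_right_mono)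
    finally show ?thesis .
  qed
  show "KL_cond Y q p \<le> ln (b / a)" using KL(2) Rk by blast
  assume Nk: "real N \<ge> b / a"
  define \<kappa> where "\<kappa> = b / a"
  have kp: "\<kappa> > 0" unfolding \<kappa>_def using a ba by simp
  have Np: "real N > 0" using N by simp
  have Vb: "V \<le> b * \<mu>"
  proof -
    have "V = (\<Sum>y\<in>Y. g y * (\<phi> y)^2) - 2 * \<mu> * (\<Sum>y\<in>Y. g y * \<phi> y) + \<mu>^2 * (\<Sum>y\<in>Y. g y)"
      unfolding V_def by (simp add: power2_diff algebra_simps sum.distrib sum_subtractf sum_distrib_left sum_distrib_right)
    also have "\<dots> = (\<Sum>y\<in>Y. g y * (\<phi> y)^2) - \<mu>^2" using g1 unfolding \<mu>_def[symmetric] by (simp add: power2_eq_square)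
    also have "\<dots> \<le> (\<Sum>y\<in>Y. g y * (b * \<phi> y))"
    proof -
      have "(\<Sum>y\<in>Y. g y * (\<phi> y)^2) \<le> (\<Sum>y\<in>Y. g y * (b * \<phi> y))"
        using ab gnn phin by (intro sum_mono mult_left_mono) (auto simp: power2_eq_square intro!: mult_right_mono)
      moreover have "\<mu>^2 \<ge> 0" by simp
      ultimately show ?thesis by linarith
    qed
    also have "\<dots> = b * \<mu>" unfolding \<mu>_def by (simp add: sum_distrib_left algebra_simps)
    finally show ?thesis .
  qed
  have Rclose: "\<bar>R y - 1\<bar> \<le> 3 * \<kappa> / real N" if y: "y \<in> Y" for y
  proof -
    define c where "c = \<phi> y - \<mu>"
    define L where "L = 1/(real N * \<mu>) - c/(real N * \<mu>)^2"
    define E0 where "E0 = (c^2 + (real N - 1) * V) / ((real N * \<mu>)^2 * (real N * a))"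
    have lo: "R y \<ge> \<mu> * (real N * L)"
    proof -
      have "(\<Sum>i<N. L) \<le> (\<Sum>i<N. Q y i)" using Qb(2)[OF y] unfolding L_def c_def by (intro sum_mono) auto
      then show ?thesis unfolding R_def using mup by (intro mult_left_mono) auto
    qed
    have hi: "R y \<le> \<mu> * (real N * (L + E0))"
    proof -
      have "(\<Sum>i<N. Q y i) \<le> (\<Sum>i<N. L + E0)" using Qb(3)[OF y] unfolding L_def c_def E0_def by (intro sum_mono) auto
      then show ?thesis unfolding R_def using mup by (intro mult_left_mono) auto
    qed
    have L': "\<mu> * (real N * L) = 1 - c / (real N * \<mu>)"
      unfolding L_def using mup Np by (simp add: field_simps power2_eq_square)
    have E': "\<mu> * (real N * E0) = (c^2 + (real N - 1) * V) / (real N^2 * \<mu> * a)"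
      unfolding E0_def using mup Np a by (simp add: field_simps power2_eq_square)
    have cb: "\<bar>c\<bar> \<le> b" unfolding c_def using ab[OF y] mua mub a by auto
    have t1: "\<bar>c / (real N * \<mu>)\<bar> \<le> \<kappa> / real N"
    proof -
      have "\<bar>c / (real N * \<mu>)\<bar> = \<bar>c\<bar> / (real N * \<mu>)" using mup Np by (simp add: abs_div)
      also have "\<dots> \<le> b / (real N * a)"
        using cb mua a Np by (intro frac_le mult_left_mono) auto
      finally show ?thesis unfolding \<kappa>_def by (simp add: mult.commute)
    qed
    have E0n: "\<mu> * (real N * E0) \<ge> 0"
      unfolding E' using Vb N mup a Np
      by (intro divide_nonneg_pos add_nonneg_nonneg mult_nonneg_nonneg) (auto simp: V_def intro!: sum_nonneg mult_nonneg_nonneg gnn)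
    have t2: "\<mu> * (real N * E0) \<le> \<kappa>^2 / (real N)^2 + \<kappa> / real N"
    proof -
      have "c^2 \<le> b^2" using cb by (metis abs_le_square_iff abs_of_nonneg a ba less_le_trans less_imp_le)
      moreover have "(real N - 1) * V \<le> real N * (b * \<mu>)"
      proof -
        have "V \<ge> 0" unfolding V_def by (intro sum_nonneg mult_nonneg_nonneg gnn) auto
        then have "(real N - 1) * V \<le> real N * V" by (simp add: algebra_simps)
        also have "\<dots> \<le> real N * (b * \<mu>)" using Vb Np by (intro mult_left_mono) auto
        finally show ?thesis .
      qed
      ultimately have "(c^2 + (real N - 1) * V) / (real N^2 * \<mu> * a) \<le> (b^2 + real N * (b * \<mu>)) / (real N^2 * \<mu> * a)"
        using mup a Np by (intro divide_right_mono) auto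
      also have "\<dots> = b^2 / (real N^2 * \<mu> * a) + b / (real N * a)"
        using mup a Np by (simp add: field_simps power2_eq_square)
      also have "b^2 / (real N^2 * \<mu> * a) \<le> b^2 / (real N^2 * a * a)"
        using mup a Np mua by (intro divide_left_mono mult_right_mono mult_left_mono mult_pos_pos) auto
      also have "b^2 / (real N^2 * a * a) = \<kappa>^2 / (real N)^2" unfolding \<kappa>_def by (simp add: power2_eq_square field_simps)
      also have "b / (real N * a) = \<kappa> / real N" unfolding \<kappa>_def by simp
      finally show ?thesis unfolding E' by simp
    qed
    have kN: "\<kappa>^2 / (real N)^2 \<le> \<kappa> / real N"
    proof -
      have "\<kappa> \<le> real N" using Nk unfolding \<kappa>_def by simp
      then have "\<kappa> / real N \<le> 1" using Np by (simp add: divide_le_eq)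
      then have "(\<kappa> / real N) * (\<kappa> / real N) \<le> 1 * (\<kappa> / real N)"
        using kp Np by (intro mult_right_mono) auto
      then show ?thesis by (simp add: power2_eq_square)
    qed
    have hi': "R y \<le> 1 - c / (real N * \<mu>) + \<mu> * (real N * E0)"
      using hi L' by (simp add: distrib_left)
    have ab1: "- (c / (real N * \<mu>)) \<le> \<bar>c / (real N * \<mu>)\<bar>" by (rule abs_ge_minus_self)
    have ab2: "c / (real N * \<mu>) \<le> \<bar>c / (real N * \<mu>)\<bar>" by (rule abs_ge_self)
    have kN0: "\<kappa> / real N \<ge> 0" using kp Np by simp
    have e3: "3 * \<kappa> / real N = 3 * (\<kappa> / real N)" by simp
    show ?thesis unfolding abs_le_iff e3 using lin_aux[OF hi' lo[unfolded L'] ab1 ab2 t1 t2 kN kN0] .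
  qed
  have "KL_cond Y q p \<le> (3 * \<kappa> / real N)^2" using KL(3) Rclose by blast
  also have "\<dots> = 9 * (b / a)^2 / (real N)^2" unfolding \<kappa>_def by (simp add: power_divide power_mult_distrib)
  finally show "KL_cond Y q p \<le> 9 * (b / a)^2 / (real N)^2" .
qed

lemma exp_sums_real: "(\<lambda>k. x^k / fact k) sums exp (x::real)"
  using exp_converges[of x] by (simp add: divide_inverse mult.commute)

lemma exp_m1_le: "exp (-1::real) \<le> 4/9"
proof -
  have h: "exp (1/2::real) \<ge> 3/2" using exp_ge_add_one_self[of "1/2::real"] by simp
  have "exp (1::real) = exp (1/2) * exp (1/2)" by (simp flip: exp_add)
  also have "\<dots> \<ge> 3/2 * (3/2)" using h by (intro mult_mono) auto
  finally have "exp (1::real) \<ge> 9/4" by simp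
  then show ?thesis by (simp add: exp_minus field_simps)
qed

lemma exp_decay: assumes "n \<ge> (3::nat)" shows "exp (- real n / 18) \<le> 52488 / (real n)^2"
proof -
  define t where "t = real n / 54"
  have tp: "t > 0" using assms unfolding t_def by simp
  have "exp (real n / 18) = exp t ^ 3" unfolding t_def by (simp flip: exp_of_nat_mult)
  also have "\<dots> \<ge> t ^ 3"
  proof -
    have "t \<le> exp t" using exp_ge_add_one_self[of t] by linarith
    then show ?thesis using tp by (intro power_mono) auto
  qed
  finally have e: "exp (real n / 18) \<ge> t^3" .
  have "exp (- real n / 18) = 1 / exp (real n / 18)" by (simp add: exp_minus field_simps)
  also have "\<dots> \<le> 1 / t^3" using e tp by (intro divide_left_mono) auto
  also have "\<dots> = 157464 / (real n)^3" unfolding t_def by (simp add: field_simps)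
  also have "\<dots> \<le> 52488 / (real n)^2"
    using assms by (simp add: field_simps power3_eq_cube power2_eq_square)
  finally show ?thesis .
qed

lemma ln_n_ge1: assumes "n \<ge> (3::nat)" shows "ln (real n) \<ge> 1"
proof -
  have "exp 1 \<le> real n" using exp_le assms by linarith
  then show ?thesis using assms by (simp add: ln_ge_iff)
qed

lemma poisson_part:
  fixes KL :: "nat \<Rightarrow> real" and n :: nat and \<kappa> :: real
  assumes n: "n \<ge> 3" and k1: "\<kappa> \<ge> 1"
    and KLb: "\<And>N. N \<ge> 1 \<Longrightarrow> 0 \<le> KL N \<and> KL N \<le> ln \<kappa>"
    and KLs: "\<And>N. N \<ge> 1 \<Longrightarrow> real N \<ge> \<kappa> \<Longrightarrow> KL N \<le> 9 * \<kappa>^2 / (real N)^2"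
  shows "summable (\<lambda>N. poi_pos (real n) N * KL N) \<and>
         (\<Sum>N. poi_pos (real n) N * KL N) \<le> 105048 * (ln (real n))^2 / (real n)^2 * \<kappa>^2"
proof -
  define Ln where "Ln = ln (real n)"
  have Ln1: "Ln \<ge> 1" unfolding Ln_def using ln_n_ge1[OF n] .
  have np: "real n > 0" using n by simp
  define K' where "K' = 36 * (Ln^2 * \<kappa>^2 / (real n)^2)"
  have K'0: "K' \<ge> 0" unfolding K'_def by simp
  define u where "u = (\<lambda>N. 2 * exp (- real n) * (real n ^ N / fact N))"
  define v where "v = (\<lambda>N. 2 * exp (- real n) * exp (real n / 2) * ((real n * exp (-1)) ^ N / fact N))"
  define h where "h = (\<lambda>N. K' * u N + \<kappa>^2 * v N)"
  have us: "u sums (2 * exp (- real n) * exp (real n))"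
    unfolding u_def by (intro sums_mult exp_sums_real)
  have vs: "v sums (2 * exp (- real n) * exp (real n / 2) * exp (real n * exp (-1)))"
    unfolding v_def by (intro sums_mult exp_sums_real)
  have hs: "h sums (K' * (2 * exp (- real n) * exp (real n)) + \<kappa>^2 * (2 * exp (- real n) * exp (real n / 2) * exp (real n * exp (-1))))"
    unfolding h_def by (intro sums_add sums_mult us vs)
  have u0: "u N \<ge> 0" for N unfolding u_def by simp
  have v0: "v N \<ge> 0" for N unfolding v_def using np by simp
  have en: "exp (- real n) \<le> 1/2"
  proof -
    have "exp (real n) \<ge> 2" using exp_ge_add_one_self[of "real n"] n by linarith
    then show ?thesis by (simp add: exp_minus field_simps)
  qed
  have w0: "poi_pos (real n) N \<ge> 0" for N
    unfolding poi_pos_def using en by (auto intro!: divide_nonneg_pos)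
  have wu: "poi_pos (real n) N \<le> u N" for N
  proof (cases "N = 0")
    case True then show ?thesis using u0 by (simp add: poi_pos_def)
  next
    case False
    define x where "x = exp (- real n) * real n ^ N / fact N"
    have x0: "x \<ge> 0" unfolding x_def by simp
    have "poi_pos (real n) N = x / (1 - exp (- real n))" using False unfolding poi_pos_def x_def by simp
    also have "\<dots> \<le> x / (1/2)" using en x0 np by (intro divide_left_mono) auto
    also have "\<dots> = u N" unfolding u_def x_def by simp
    finally show ?thesis .
  qed
  have lnk: "ln \<kappa> \<le> \<kappa>^2"
  proof -
    have "ln \<kappa> \<le> \<kappa> - 1" using k1 by (intro ln_le_minus_one) auto
    also have "\<dots> \<le> \<kappa> * \<kappa>"
    proof -
      have "\<kappa> * 1 \<le> \<kappa> * \<kappa>" using k1 by (intro mult_left_mono) auto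
      then show ?thesis by linarith
    qed
    finally show ?thesis by (simp add: power2_eq_square)
  qed
  have Ln2: "Ln^2 \<ge> 1" using Ln1 by (simp add: one_le_power)
  have big: "ln \<kappa> \<le> 6 * (Ln^2 * \<kappa>^2 / (real n)^2)" if kb: "\<kappa> > real n / 2"
  proof -
    define t where "t = \<kappa> / real n"
    have t2: "2 * t > 1" using kb np unfolding t_def by (simp add: field_simps)
    have tp: "t > 0" using t2 by simp
    have lk: "ln \<kappa> = Ln + ln t" unfolding t_def Ln_def using np k1 by (simp add: ln_div)
    have "ln t \<le> t - 1" using tp by (intro ln_le_minus_one)
    also have "\<dots> \<le> t * (2 * t)" using t2 tp
    proof -
      have "t * 1 \<le> t * (2 * t)" using t2 tp by (intro mult_left_mono) auto
      then show ?thesis by simp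
    qed
    also have "\<dots> = 2 * t^2" by (simp add: power2_eq_square)
    also have "\<dots> \<le> 2 * t^2 * Ln^2"
    proof -
      have "2 * t^2 * 1 \<le> 2 * t^2 * Ln^2" using Ln2 by (intro mult_left_mono) auto
      then show ?thesis by simp
    qed
    finally have a1: "ln t \<le> 2 * t^2 * Ln^2" .
    have "Ln * 1 \<le> Ln * Ln" using Ln1 by (intro mult_left_mono) auto
    then have "Ln \<le> Ln^2" by (simp add: power2_eq_square)
    also have "\<dots> \<le> Ln^2 * (2 * t)^2"
    proof -
      have "(2 * t)^2 \<ge> 1" using t2 by (intro one_le_power) simp
      then have "Ln^2 * 1 \<le> Ln^2 * (2 * t)^2" by (intro mult_left_mono) auto
      then show ?thesis by simp
    qed
    finally have a2: "Ln \<le> 4 * t^2 * Ln^2" by (simp add: power_mult_distrib mult.commute)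
    have "ln \<kappa> \<le> 6 * t^2 * Ln^2" using lk a1 a2 by linarith
    also have "\<dots> = 6 * (Ln^2 * \<kappa>^2 / (real n)^2)" unfolding t_def by (simp add: power_divide)
    finally show ?thesis .
  qed
  have Eh: "poi_pos (real n) N * KL N \<le> h N" for N
  proof (cases "N = 0")
    case True
    then show ?thesis unfolding h_def using K'0 u0 v0 by (simp add: poi_pos_def)
  next
    case False
    then have N1: "N \<ge> 1" by simp
    note KB = KLb[OF N1]
    show ?thesis
    proof (cases "2 * N \<ge> n")
      case True
      have KK: "KL N \<le> K'"
      proof (cases "\<kappa> \<le> real n / 2")
        case True
        have Nn: "real N \<ge> real n / 2" using \<open>2 * N \<ge> n\<close> by linarith
        have "KL N \<le> 9 * \<kappa>^2 / (real N)^2" using KLs[OF N1] Nn True by linarith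
        also have "\<dots> \<le> 9 * \<kappa>^2 / (real n / 2)^2"
          using Nn np by (intro divide_left_mono power_mono mult_pos_pos) auto
        also have "\<dots> = 36 * (1 * \<kappa>^2 / (real n)^2)" by (simp add: power_divide)
        also have "\<dots> \<le> K'" unfolding K'_def using Ln2
          by (intro mult_left_mono divide_right_mono mult_right_mono) auto
        finally show ?thesis .
      next
        case False
        have "KL N \<le> ln \<kappa>" using KB by simp
        also have "\<dots> \<le> 6 * (Ln^2 * \<kappa>^2 / (real n)^2)" using big False by simp
        also have "\<dots> \<le> K'" unfolding K'_def by (intro mult_right_mono) auto
        finally show ?thesis .
      qed
      have "poi_pos (real n) N * KL N \<le> u N * K'"
        using wu w0 u0 KB KK K'0 by (intro mult_mono) auto
      then show ?thesis unfolding h_def using v0 by (simp add: mult.commute) (smt (verit) mult_nonneg_nonneg zero_le_power2)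
    next
      case False
      have uv: "u N \<le> v N"
      proof -
        have "v N = u N * (exp (real n / 2) * exp (-1) ^ N)"
          unfolding u_def v_def by (simp add: power_mult_distrib field_simps)
        also have "exp (real n / 2) * exp (-1) ^ N = exp (real n / 2 - real N)"
        proof -
          have "exp (-1) ^ N = exp (- real N)" using exp_of_nat_mult[of N "-1::real"] by simp
          then have "exp (real n / 2) * exp (-1) ^ N = exp (real n / 2 + - real N)" by (simp only: exp_add)
          then show ?thesis by simp
        qed
        also have "\<dots> \<ge> 1" using False by simp
        then have "u N * 1 \<le> u N * exp (real n / 2 - real N)" using u0 by (intro mult_left_mono) auto
        ultimately show ?thesis by simp
      qed
      have "poi_pos (real n) N * KL N \<le> u N * \<kappa>^2"
        using wu w0 u0 KB lnk by (intro mult_mono) auto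
      also have "\<dots> \<le> v N * \<kappa>^2" using uv by (intro mult_right_mono) auto
      finally show ?thesis unfolding h_def using K'0 u0 by (simp add: mult.commute) (smt (verit) mult_nonneg_nonneg)
    qed
  qed
  have lk0: "ln \<kappa> \<ge> 0" using k1 by simp
  have sumE: "summable (\<lambda>N. poi_pos (real n) N * KL N)"
  proof (rule summable_comparison_test')
    show "summable (\<lambda>N. u N * ln \<kappa>)" using us by (intro summable_mult2 sums_summable)
    fix N :: nat assume "N \<ge> 0"
    show "norm (poi_pos (real n) N * KL N) \<le> u N * ln \<kappa>"
    proof (cases "N = 0")
      case True then show ?thesis using u0 lk0 by (simp add: poi_pos_def)
    next
      case False
      then have KB: "0 \<le> KL N \<and> KL N \<le> ln \<kappa>" using KLb by simp
      then have "norm (poi_pos (real n) N * KL N) = poi_pos (real n) N * KL N" using w0 by simp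
      also have "\<dots> \<le> u N * ln \<kappa>" using wu w0 u0 KB by (intro mult_mono) auto
      finally show ?thesis .
    qed
  qed
  have "(\<Sum>N. poi_pos (real n) N * KL N) \<le> (\<Sum>N. h N)"
    using Eh sumE sums_summable[OF hs] by (intro suminf_le) auto
  also have "\<dots> = K' * (2 * exp (- real n) * exp (real n)) + \<kappa>^2 * (2 * exp (- real n) * exp (real n / 2) * exp (real n * exp (-1)))"
    using hs by (simp add: sums_iff)
  also have "\<dots> \<le> 105048 * Ln^2 / (real n)^2 * \<kappa>^2"
  proof -
    have e1: "2 * exp (- real n) * exp (real n) = 2" by (simp flip: exp_add)
    have "exp (- real n) * exp (real n / 2) * exp (real n * exp (-1)) = exp (- real n + real n / 2 + real n * exp (-1))"
      by (simp flip: exp_add)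
    also have "\<dots> \<le> exp (- real n / 18)"
    proof -
      have "real n * exp (-1) \<le> real n * (4/9)" using exp_m1_le np by (intro mult_left_mono) auto
      then show ?thesis by simp
    qed
    also have "\<dots> \<le> 52488 / (real n)^2" using exp_decay[OF n] .
    finally have e2: "exp (- real n) * exp (real n / 2) * exp (real n * exp (-1)) \<le> 52488 / (real n)^2" .
    have "\<kappa>^2 * (2 * exp (- real n) * exp (real n / 2) * exp (real n * exp (-1))) \<le> \<kappa>^2 * (2 * (52488 / (real n)^2))"
      using e2 by (intro mult_left_mono) (auto simp: mult.assoc)
    also have "\<dots> \<le> \<kappa>^2 * (2 * (52488 * Ln^2 / (real n)^2))"
      using Ln2 by (intro mult_left_mono divide_right_mono) auto
    also have "\<kappa>^2 * (2 * (52488 * Ln^2 / (real n)^2)) = 104976 * (Ln^2 * \<kappa>^2 / (real n)^2)" by simp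
    finally have e3: "\<kappa>^2 * (2 * exp (- real n) * exp (real n / 2) * exp (real n * exp (-1))) \<le> 104976 * (Ln^2 * \<kappa>^2 / (real n)^2)" .
    have e4: "K' * (2 * exp (- real n) * exp (real n)) = 72 * (Ln^2 * \<kappa>^2 / (real n)^2)" unfolding e1 K'_def by simp
    have e5: "105048 * Ln^2 / (real n)^2 * \<kappa>^2 = 105048 * (Ln^2 * \<kappa>^2 / (real n)^2)" by simp
    define X where "X = Ln^2 * \<kappa>^2 / (real n)^2"
    show ?thesis unfolding e5 using e3 e4 unfolding X_def[symmetric] by linarith
  qed
  finally show ?thesis using sumE unfolding Ln_def by simp
qed



lemma KL_x:
  fixes X Y :: "nat set" and tgt gen :: "nat \<Rightarrow> nat pmf" and r :: "nat \<Rightarrow> nat \<Rightarrow> real" and \<beta> a b :: real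
    and N :: nat and x :: nat
  assumes finY: "finite Y" and Yne: "Y \<noteq> {}" and genY: "set_pmf (gen x) = Y"
    and ab: "\<And>y. y \<in> Y \<Longrightarrow> a \<le> phi tgt gen r \<beta> x y \<and> phi tgt gen r \<beta> x y \<le> b"
    and a: "a > 0" and N: "N \<ge> 1"
  shows "0 \<le> KL_cond Y (smc Y tgt gen r \<beta> N x) (pistar Y tgt r \<beta> x)
     \<and> KL_cond Y (smc Y tgt gen r \<beta> N x) (pistar Y tgt r \<beta> x) \<le> ln (b / a)
     \<and> (real N \<ge> b / a \<longrightarrow> KL_cond Y (smc Y tgt gen r \<beta> N x) (pistar Y tgt r \<beta> x) \<le> 9 * (b / a)^2 / (real N)^2)"
proof -
  define g where "g = pmf (gen x)"
  define \<phi> where "\<phi> = phi tgt gen r \<beta> x"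
  define \<mu> where "\<mu> = (\<Sum>y\<in>Y. g y * \<phi> y)"
  define q where "q = (\<lambda>y. (\<Sum>ys\<in>PiE {..<N} (\<lambda>_. Y). (\<Prod>i<N. g (ys i)) *
            ((\<Sum>i<N. if ys i = y then \<phi> (ys i) else 0) / (\<Sum>j<N. \<phi> (ys j)))))"
  define p where "p = (\<lambda>y. g y * \<phi> y / \<mu>)"
  have g1: "(\<Sum>y\<in>Y. g y) = 1" unfolding g_def using sum_pmf_eq_1[OF finY] genY by simp
  have gpos: "g y > 0" if "y \<in> Y" for y unfolding g_def using that genY by (simp add: pmf_positive)
  have ab': "a \<le> \<phi> y \<and> \<phi> y \<le> b" if "y \<in> Y" for y unfolding \<phi>_def using ab that by blast
  note P0 = per_x[where Y=Y and g=g and \<phi>=\<phi> and a=a and b=b and N=N]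
  have P: "0 \<le> KL_cond Y q p" "KL_cond Y q p \<le> ln (b / a)"
     "real N \<ge> b / a \<Longrightarrow> KL_cond Y q p \<le> 9 * (b / a)^2 / (real N)^2"
    using P0 finY Yne g1 gpos ab' a N unfolding q_def p_def \<mu>_def by blast+
  have sm: "smc Y tgt gen r \<beta> N x = q" unfolding q_def g_def \<phi>_def by (rule ext) (simp add: smc_def)
  have gphi: "g y * \<phi> y = pmf (tgt x) y * exp (\<beta> * r x y)" if "y \<in> Y" for y
    using gpos[OF that] unfolding g_def \<phi>_def phi_def by simp
  have mu: "\<mu> = (\<Sum>y'\<in>Y. pmf (tgt x) y' * exp (\<beta> * r x y'))"
    unfolding \<mu>_def using gphi by (intro sum.cong) auto
  have pp: "KL_cond Y q (pistar Y tgt r \<beta> x) = KL_cond Y q p"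
    unfolding KL_cond_def by (intro sum.cong refl) (simp add: pistar_def p_def gphi mu)
  show ?thesis unfolding sm pp using P by blast
qed


theorem theoremB7:
  "\<exists>C::real. \<forall>X Y (\<rho>::nat pmf) (tgt::nat \<Rightarrow> nat pmf) (gen::nat \<Rightarrow> nat pmf)
      (r::nat \<Rightarrow> nat \<Rightarrow> real) (\<beta>::real) (n::nat).
     finite X \<and> X \<noteq> {} \<and> finite Y \<and> Y \<noteq> {} \<and>
     set_pmf \<rho> \<subseteq> X \<and>
     (\<forall>x\<in>X. set_pmf (gen x) = Y \<and> set_pmf (tgt x) \<subseteq> Y) \<and>
     \<beta> > 0 \<and> phi_min X Y tgt gen r \<beta> > 0 \<and> n \<ge> 3
     \<longrightarrow>
     (let E = (\<lambda>N. poi_pos (real n) N *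
                   KL_avg X Y \<rho> (smc Y tgt gen r \<beta> N) (pistar Y tgt r \<beta>))
      in summable E \<and>
         suminf E \<le> C * (ln (real n))\<^sup>2 / (real n)\<^sup>2 *
                       (phi_max X Y tgt gen r \<beta> / phi_min X Y tgt gen r \<beta>)\<^sup>2)"
proof (intro exI[of _ 105048] allI impI)
  fix X Y :: "nat set" and \<rho> :: "nat pmf" and tgt gen :: "nat \<Rightarrow> nat pmf"
    and r :: "nat \<Rightarrow> nat \<Rightarrow> real" and \<beta> :: real and n :: nat
  assume H: "finite X \<and> X \<noteq> {} \<and> finite Y \<and> Y \<noteq> {} \<and>
     set_pmf \<rho> \<subseteq> X \<and>
     (\<forall>x\<in>X. set_pmf (gen x) = Y \<and> set_pmf (tgt x) \<subseteq> Y) \<and>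
     \<beta> > 0 \<and> phi_min X Y tgt gen r \<beta> > 0 \<and> n \<ge> 3"
  then have finX: "finite X" and Xne: "X \<noteq> {}" and finY: "finite Y" and Yne: "Y \<noteq> {}"
    and rX: "set_pmf \<rho> \<subseteq> X" and genY: "\<And>x. x \<in> X \<Longrightarrow> set_pmf (gen x) = Y"
    and apos: "phi_min X Y tgt gen r \<beta> > 0" and n: "n \<ge> 3" by auto
  define a where "a = phi_min X Y tgt gen r \<beta>"
  define b where "b = phi_max X Y tgt gen r \<beta>"
  define F where "F = (\<lambda>(x, y). phi tgt gen r \<beta> x y)"
  have finF: "finite (F ` (X \<times> Y))" using finX finY by simp
  have ab: "a \<le> phi tgt gen r \<beta> x y \<and> phi tgt gen r \<beta> x y \<le> b" if "x \<in> X" "y \<in> Y" for x y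
  proof -
    have m: "phi tgt gen r \<beta> x y \<in> F ` (X \<times> Y)" using that unfolding F_def by force
    show ?thesis unfolding a_def b_def phi_min_def phi_max_def F_def[symmetric]
      using Min_le[OF finF m] Max_ge[OF finF m] by simp
  qed
  have a0: "a > 0" using apos a_def by simp
  obtain x0 y0 where x0: "x0 \<in> X" and y0: "y0 \<in> Y" using Xne Yne by blast
  have ba: "a \<le> b" using ab[OF x0 y0] by linarith
  define \<kappa> where "\<kappa> = b / a"
  have k1: "\<kappa> \<ge> 1" unfolding \<kappa>_def using ba a0 by simp
  define KL where "KL = (\<lambda>N. KL_avg X Y \<rho> (smc Y tgt gen r \<beta> N) (pistar Y tgt r \<beta>))"
  have r1: "(\<Sum>x\<in>X. pmf \<rho> x) = 1" using sum_pmf_eq_1[OF finX rX] .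
  have avg: "KL_avg X Y \<rho> (smc Y tgt gen r \<beta> N) (pistar Y tgt r \<beta>) \<le> B"
    if "\<And>x. x \<in> X \<Longrightarrow> KL_cond Y (smc Y tgt gen r \<beta> N x) (pistar Y tgt r \<beta> x) \<le> B" for N B
  proof -
    have "KL_avg X Y \<rho> (smc Y tgt gen r \<beta> N) (pistar Y tgt r \<beta>) \<le> (\<Sum>x\<in>X. pmf \<rho> x * B)"
      unfolding KL_avg_def using that by (intro sum_mono mult_left_mono) auto
    also have "\<dots> = B" using r1 by (simp add: sum_distrib_right[symmetric])
    finally show ?thesis .
  qed
  have avg0: "KL_avg X Y \<rho> (smc Y tgt gen r \<beta> N) (pistar Y tgt r \<beta>) \<ge> 0"
    if "\<And>x. x \<in> X \<Longrightarrow> KL_cond Y (smc Y tgt gen r \<beta> N x) (pistar Y tgt r \<beta> x) \<ge> 0" for N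
    unfolding KL_avg_def using that by (intro sum_nonneg mult_nonneg_nonneg) auto
  have KLx: "0 \<le> KL_cond Y (smc Y tgt gen r \<beta> N x) (pistar Y tgt r \<beta> x)
     \<and> KL_cond Y (smc Y tgt gen r \<beta> N x) (pistar Y tgt r \<beta> x) \<le> ln (b / a)
     \<and> (real N \<ge> b / a \<longrightarrow> KL_cond Y (smc Y tgt gen r \<beta> N x) (pistar Y tgt r \<beta> x) \<le> 9 * (b / a)^2 / (real N)^2)"
    if "x \<in> X" "N \<ge> 1" for x N
    using KL_x[OF finY Yne genY[OF that(1)] ab[OF that(1)] a0 that(2)] by blast
  have KLb: "0 \<le> KL N \<and> KL N \<le> ln \<kappa>" if "N \<ge> 1" for N
    unfolding KL_def \<kappa>_def using avg avg0 KLx that by blast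
  have KLs: "KL N \<le> 9 * \<kappa>^2 / (real N)^2" if "N \<ge> 1" "real N \<ge> \<kappa>" for N
    unfolding KL_def \<kappa>_def using avg KLx that unfolding \<kappa>_def by blast
  have main: "summable (\<lambda>N. poi_pos (real n) N * KL N) \<and>
         (\<Sum>N. poi_pos (real n) N * KL N) \<le> 105048 * (ln (real n))^2 / (real n)^2 * \<kappa>^2"
    by (rule poisson_part[OF n k1 KLb KLs])
  show "let E = (\<lambda>N. poi_pos (real n) N *
                   KL_avg X Y \<rho> (smc Y tgt gen r \<beta> N) (pistar Y tgt r \<beta>))
      in summable E \<and>
         suminf E \<le> 105048 * (ln (real n))\<^sup>2 / (real n)\<^sup>2 *
                       (phi_max X Y tgt gen r \<beta> / phi_min X Y tgt gen r \<beta>)\<^sup>2"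
    using main unfolding Let_def KL_def \<kappa>_def a_def b_def .
qed

end
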